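(* Let $f$ be a norm on $\mathbb{R}^n$ and let $\alpha\in\mathbb{R}^n$ be badly approximable, i.e. there is $D>0$ with $\max_{1\le j\le n}\min_{a_j\in\mathbb{Z}}|p\alpha_j-a_j|\ge Dp^{-1/n}$ for all $p\in\mathbb{N}$. Then there exists $h^*=h^*(f,\alpha)\in\mathbb{N}$ such that $$f(\xi_{\nu+h^*})<\tfrac12 f(\xi_\nu)\quad\text{for all }\nu\ge1,$$ where $(p_\nu,a_\nu)$ is the $\nu$-th $f$-best simultaneous approximation to $\alpha$ and $\xi_\nu=\alpha p_\nu-a_\nu$.
   Context: A norm $f$ here is a continuous function $\mathbb{R}^n\to\mathbb{R}_+$ with $f(x)=0\iff x=0$, $f(-x)=f(x)$, $f(tx)=tf(x)$ for $t\ge0$, and convex unit ball $B_f^1=\{y:f(y)\le1\}$ with $0$ in its interior. For $\alpha\in\mathbb{R}^n$, an $f$-best simultaneous approximation is an integer point $\tau=(p,a_1,\dots,a_n)\in\mathbb{Z}^{n+1}$ with $p\ge1$ such that $f(\alpha q-b)>f(\alpha p-a)$ for all $(q,b)\in\mathbb{Z}^{n+1}$ with $1\le q\le p-1$ and for all $(p,b)$ with $b\ne a$. They form a sequence $(p_\nu,a_\nu)$ with $p_1<p_2<\dots$. *)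

theory Defs
  imports "HOL-Analysis.Analysis"
begin

definition is_norm_fun :: "(real^'n \<Rightarrow> real) \<Rightarrow> bool" where
  "is_norm_fun f \<longleftrightarrow>
     continuous_on UNIV f \<and>
     (\<forall>x. f x \<ge> 0) \<and>
     (\<forall>x. f x = 0 \<longleftrightarrow> x = 0) \<and>
     (\<forall>x. f (- x) = f x) \<and>
     (\<forall>t x. t \<ge> 0 \<longrightarrow> f (t *\<^sub>R x) = t * f x) \<and>
     convex {y. f y \<le> 1} \<and>
     0 \<in> interior {y. f y \<le> 1}"

definition int_vec :: "int^'n \<Rightarrow> real^'n" where
  "int_vec a = (\<chi> i. real_of_int (a $ i))"

definition dist_int :: "real \<Rightarrow> real" where
  "dist_int x = (INF a::int. \<bar>x - real_of_int a\<bar>)"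

definition badly_approximable :: "real^'n \<Rightarrow> bool" where
  "badly_approximable \<alpha> \<longleftrightarrow>
     (\<exists>D>0. \<forall>p::nat. p \<ge> 1 \<longrightarrow>
        Max (range (\<lambda>j. dist_int (real p * \<alpha> $ j))) \<ge> D * real p powr (- 1 / real CARD('n)))"

definition best_approx :: "(real^'n \<Rightarrow> real) \<Rightarrow> real^'n \<Rightarrow> nat \<Rightarrow> int^'n \<Rightarrow> bool" where
  "best_approx f \<alpha> p a \<longleftrightarrow> p \<ge> 1 \<and>
     (\<forall>q b. 1 \<le> q \<and> q \<le> p - 1 \<longrightarrow> f (real q *\<^sub>R \<alpha> - int_vec b) > f (real p *\<^sub>R \<alpha> - int_vec a)) \<and>
     (\<forall>b. b \<noteq> a \<longrightarrow> f (real p *\<^sub>R \<alpha> - int_vec b) > f (real p *\<^sub>R \<alpha> - int_vec a))"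

end

theory Submission
  imports Defs
begin



lemma norm_lower:
  fixes f :: "real^'n \<Rightarrow> real"
  assumes "is_norm_fun f"
  shows "\<exists>c>0. \<forall>x. c * norm x \<le> f x"
proof -
  have cont: "continuous_on (sphere (0::real^'n) 1) f"
    using assms unfolding is_norm_fun_def by (meson continuous_on_subset subset_UNIV)
  have ne: "sphere (0::real^'n) 1 \<noteq> {}"
    by simp
  obtain x0 where x0: "x0 \<in> sphere 0 1" and min: "\<forall>y\<in>sphere 0 1. f x0 \<le> f y"
    using continuous_attains_inf[OF compact_sphere ne cont] by blast
  have "x0 \<noteq> 0" using x0 by auto
  hence pos: "f x0 > 0" using assms unfolding is_norm_fun_def by (metis less_eq_real_def)
  have "f x0 * norm x \<le> f x" for x
  proof (cases "x = 0")
    case True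
    have "f 0 = 0" using assms unfolding is_norm_fun_def by blast
    thus ?thesis using True by simp
  next
    case False
    have "f x = f (norm x *\<^sub>R ((1/norm x) *\<^sub>R x))" using False by simp
    also have "\<dots> = norm x * f ((1/norm x) *\<^sub>R x)" using assms unfolding is_norm_fun_def by simp
    finally have e: "f x = norm x * f ((1/norm x) *\<^sub>R x)" .
    have "(1/norm x) *\<^sub>R x \<in> sphere 0 1" using False by simp
    hence "f x0 \<le> f ((1/norm x) *\<^sub>R x)" using min by blast
    thus ?thesis using e by (simp add: mult.commute mult_left_mono)
  qed
  thus ?thesis using pos by blast
qed

lemma norm_upper:
  fixes f :: "real^'n \<Rightarrow> real"
  assumes "is_norm_fun f"
  shows "\<exists>c>0. \<forall>x. f x \<le> c * norm x"
proof -
  have cont: "continuous_on (sphere (0::real^'n) 1) f"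
    using assms unfolding is_norm_fun_def by (meson continuous_on_subset subset_UNIV)
  have ne: "sphere (0::real^'n) 1 \<noteq> {}"
    by simp
  obtain x0 where x0: "x0 \<in> sphere 0 1" and mx: "\<forall>y\<in>sphere 0 1. f y \<le> f x0"
    using continuous_attains_sup[OF compact_sphere ne cont] by blast
  have "f x \<le> (f x0 + 1) * norm x" for x
  proof (cases "x = 0")
    case True
    have "f 0 = 0" using assms unfolding is_norm_fun_def by blast
    thus ?thesis using True by simp
  next
    case False
    have "f x = f (norm x *\<^sub>R ((1/norm x) *\<^sub>R x))" using False by simp
    also have "\<dots> = norm x * f ((1/norm x) *\<^sub>R x)" using assms unfolding is_norm_fun_def by simp
    finally have e: "f x = norm x * f ((1/norm x) *\<^sub>R x)" .
    have "(1/norm x) *\<^sub>R x \<in> sphere 0 1" using False by simp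
    hence "f ((1/norm x) *\<^sub>R x) \<le> f x0 + 1" using mx by fastforce
    thus ?thesis using e by (simp add: mult.commute mult_left_mono)
  qed
  moreover have "f x0 + 1 > 0" using assms unfolding is_norm_fun_def by (smt (verit))
  ultimately show ?thesis by blast
qed

lemma midpoint_le:
  fixes f :: "real^'n \<Rightarrow> real"
  assumes "is_norm_fun f" "f u \<le> t" "f v \<le> t" "t > 0"
  shows "f ((1/2) *\<^sub>R (u + v)) \<le> t"
proof -
  have hom: "\<And>s x. s \<ge> 0 \<Longrightarrow> f (s *\<^sub>R x) = s * f x" and cv: "convex {y. f y \<le> 1}"
    using assms(1) unfolding is_norm_fun_def by auto
  have cvx: "\<forall>x\<in>{y. f y \<le> 1}. \<forall>y\<in>{y. f y \<le> 1}. \<forall>u\<ge>0. \<forall>v\<ge>0. u + v = 1 \<longrightarrow> u *\<^sub>R x + v *\<^sub>R y \<in> {y. f y \<le> 1}"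
    using cv unfolding convex_def by blast
  have a: "f ((1/t) *\<^sub>R u) \<le> 1" using hom[of "1/t" u] assms by (simp add: divide_le_eq_1)
  have b: "f ((1/t) *\<^sub>R v) \<le> 1" using hom[of "1/t" v] assms by (simp add: divide_le_eq_1)
  have h: "(1/2::real) \<ge> 0" "(1/2::real) + 1/2 = 1" by auto
  have "(1/2::real) *\<^sub>R ((1/t) *\<^sub>R u) + (1/2::real) *\<^sub>R ((1/t) *\<^sub>R v) \<in> {y. f y \<le> 1}"
    using cvx a b h by blast
  hence c: "f ((1/2::real) *\<^sub>R ((1/t) *\<^sub>R u) + (1/2::real) *\<^sub>R ((1/t) *\<^sub>R v)) \<le> 1" by simp
  have "(1/2) *\<^sub>R (u + v) = t *\<^sub>R ((1/2::real) *\<^sub>R ((1/t) *\<^sub>R u) + (1/2::real) *\<^sub>R ((1/t) *\<^sub>R v))"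
    using assms(4) by (simp add: algebra_simps)
  hence "f ((1/2) *\<^sub>R (u + v)) = t * f ((1/2::real) *\<^sub>R ((1/t) *\<^sub>R u) + (1/2::real) *\<^sub>R ((1/t) *\<^sub>R v))"
    using hom[of t] assms(4) by simp
  thus ?thesis using c assms(4) by (simp add: mult_le_cancel_left1)
qed



abbreviation E :: "real^'n \<Rightarrow> nat \<Rightarrow> int^'n \<Rightarrow> real^'n" where
  "E \<alpha> q b \<equiv> real q *\<^sub>R \<alpha> - int_vec b"

lemma E_comp: "(E \<alpha> q b) $ i = real q * \<alpha> $ i - real_of_int (b $ i)"
  by (simp add: int_vec_def)

lemma p_mono:
  assumes "\<forall>\<nu>\<ge>1. p \<nu> < p (Suc \<nu>)" "1 \<le> l" "l < k"
  shows "p l < (p k :: nat)"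
  using assms(3)
proof (induction k)
  case 0 then show ?case by simp
next
  case (Suc k)
  show ?case
  proof (cases "l = k")
    case True thus ?thesis using assms(1,2) by auto
  next
    case False
    hence "p l < p k" using Suc by auto
    moreover have "p k < p (Suc k)" using assms(1,2) Suc.prems False by auto
    ultimately show ?thesis by simp
  qed
qed

lemma p_mono_le:
  assumes "\<forall>\<nu>\<ge>1. p \<nu> < p (Suc \<nu>)" "1 \<le> l" "l \<le> k"
  shows "p l \<le> (p k :: nat)"
  using p_mono[OF assms(1,2)] assms(3) by (metis le_neq_implies_less less_imp_le_nat order_refl)

lemma f_decr:
  assumes "\<forall>\<nu>\<ge>1. p \<nu> < p (Suc \<nu>)"
    and "\<forall>q b. best_approx f \<alpha> q b \<longleftrightarrow> (\<exists>\<nu>\<ge>1. q = p \<nu> \<and> b = a \<nu>)"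
    and "1 \<le> l" "l < k"
  shows "f (E \<alpha> (p k) (a k)) < f (E \<alpha> (p l) (a l))"
proof -
  have "k \<ge> 1" using assms(3,4) by linarith
  hence "best_approx f \<alpha> (p k) (a k)" using assms(2) by blast
  moreover have "p l < p k" using p_mono[OF assms(1,3,4)] .
  moreover have "1 \<le> p l" using assms(2,3) unfolding best_approx_def by blast
  ultimately show ?thesis unfolding best_approx_def by auto
qed

lemma lower_bound:
  fixes f :: "real^'n \<Rightarrow> real" and \<alpha> :: "real^'n"
  assumes "badly_approximable \<alpha>" "\<forall>x i. c1 * \<bar>x $ i\<bar> \<le> f x" "c1 > 0"
  shows "\<exists>D>0. \<forall>q b. q \<ge> 1 \<longrightarrow> f (E \<alpha> q b) \<ge> c1 * D * real q powr (- 1 / real CARD('n))"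
proof -
  obtain D where D: "D > 0" and H: "\<forall>q::nat. q \<ge> 1 \<longrightarrow>
        Max (range (\<lambda>j. dist_int (real q * \<alpha> $ j))) \<ge> D * real q powr (- 1 / real CARD('n))"
    using assms(1) unfolding badly_approximable_def by blast
  have "f (E \<alpha> q b) \<ge> c1 * D * real q powr (- 1 / real CARD('n))" if "q \<ge> 1" for q b
  proof -
    have "Max (range (\<lambda>j. dist_int (real q * \<alpha> $ j))) \<in> range (\<lambda>j. dist_int (real q * \<alpha> $ j))"
      by (rule Max_in) auto
    then obtain j where j: "Max (range (\<lambda>j. dist_int (real q * \<alpha> $ j))) = dist_int (real q * \<alpha> $ j)"
      by (metis (no_types, lifting) rangeE)
    have "dist_int (real q * \<alpha> $ j) \<le> \<bar>real q * \<alpha> $ j - real_of_int (b $ j)\<bar>"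
      unfolding dist_int_def by (rule cINF_lower) (auto intro: bdd_belowI[where m=0])
    also have "\<dots> = \<bar>(E \<alpha> q b) $ j\<bar>" by (simp add: int_vec_def)
    finally have "D * real q powr (- 1 / real CARD('n)) \<le> \<bar>(E \<alpha> q b) $ j\<bar>"
      using H that j by force
    hence "c1 * (D * real q powr (- 1 / real CARD('n))) \<le> c1 * \<bar>(E \<alpha> q b) $ j\<bar>"
      using assms(3) by (simp add: mult_left_mono)
    moreover have "c1 * \<bar>(E \<alpha> q b) $ j\<bar> \<le> f (E \<alpha> q b)" using assms(2) by blast
    ultimately show ?thesis by (simp add: mult.assoc)
  qed
  thus ?thesis using D by blast
qed

lemma domination:
  fixes f :: "real^'n \<Rightarrow> real" and \<alpha> :: "real^'n"
  assumes "\<forall>q b. best_approx f \<alpha> q b \<longleftrightarrow> (\<exists>\<nu>\<ge>1. q = p \<nu> \<and> b = a \<nu>)"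
    and "\<forall>x i. c1 * \<bar>x $ i\<bar> \<le> f x" "c1 > 0"
  shows "q \<ge> 1 \<Longrightarrow> f (E \<alpha> q b) < c1/2 \<Longrightarrow> \<exists>\<nu>\<ge>1. p \<nu> \<le> q \<and> f (E \<alpha> (p \<nu>) (a \<nu>)) \<le> f (E \<alpha> q b)"
proof (induction q arbitrary: b rule: less_induct)
  case (less q)
  show ?case
  proof (cases "\<exists>q' b'. 1 \<le> q' \<and> q' \<le> q - 1 \<and> f (E \<alpha> q' b') \<le> f (E \<alpha> q b)")
    case True
    then obtain q' b' where q': "1 \<le> q'" "q' \<le> q - 1" "f (E \<alpha> q' b') \<le> f (E \<alpha> q b)" by blast
    have "q' < q" using q' less.prems by linarith
    then obtain \<nu> where "\<nu> \<ge> 1" "p \<nu> \<le> q'" "f (E \<alpha> (p \<nu>) (a \<nu>)) \<le> f (E \<alpha> q' b')"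
      using less.IH[of q' b'] q' less.prems by force
    thus ?thesis using q' \<open>q' < q\<close> by force
  next
    case False
    have "f (E \<alpha> q b'') > f (E \<alpha> q b)" if "b'' \<noteq> b" for b''
    proof (rule ccontr)
      assume "\<not> ?thesis"
      hence sm: "f (E \<alpha> q b'') < c1/2" using less.prems by linarith
      obtain i where i: "b'' $ i \<noteq> b $ i" using \<open>b'' \<noteq> b\<close> by (metis vec_eq_iff)
      have "c1 * \<bar>(E \<alpha> q b'') $ i\<bar> \<le> f (E \<alpha> q b'')" using assms(2) by blast
      hence "c1 * \<bar>(E \<alpha> q b'') $ i\<bar> < c1 * (1/2)" using sm by linarith
      hence 1: "\<bar>real q * \<alpha> $ i - real_of_int (b'' $ i)\<bar> < 1/2" using assms(3) E_comp
        by (metis mult_less_cancel_left_pos)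
      have "c1 * \<bar>(E \<alpha> q b) $ i\<bar> \<le> f (E \<alpha> q b)" using assms(2) by blast
      hence "c1 * \<bar>(E \<alpha> q b) $ i\<bar> < c1 * (1/2)" using less.prems by linarith
      hence 2: "\<bar>real q * \<alpha> $ i - real_of_int (b $ i)\<bar> < 1/2" using assms(3) E_comp
        by (metis mult_less_cancel_left_pos)
      have "\<bar>real_of_int (b'' $ i) - real_of_int (b $ i)\<bar> < 1" using 1 2 by linarith
      hence "\<bar>b'' $ i - b $ i\<bar> < 1" by linarith
      thus False using i by linarith
    qed
    hence "best_approx f \<alpha> q b" unfolding best_approx_def using False less.prems(1)
      by (meson not_le)
    then obtain \<nu> where "\<nu> \<ge> 1" "q = p \<nu>" "b = a \<nu>" using assms(1) by blast
    thus ?thesis by auto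
  qed
qed



lemma floor_eq_close:
  fixes u v :: real
  assumes "\<lfloor>u\<rfloor> = \<lfloor>v\<rfloor>"
  shows "\<bar>u - v\<bar> < 1"
  using assms by linarith

lemma dirichlet:
  fixes \<alpha> :: "real^'n" and M :: nat
  assumes "M \<ge> 1"
  shows "\<exists>q b. 1 \<le> q \<and> q \<le> M ^ CARD('n) \<and> (\<forall>i. \<bar>(E \<alpha> q b) $ i\<bar> < 1 / real M)"
proof -
  define g where "g = (\<lambda>q::nat. \<lambda>i. nat \<lfloor>real M * frac (real q * \<alpha> $ i)\<rfloor>)"
  have img: "g ` {0..M ^ CARD('n)} \<subseteq> PiE UNIV (\<lambda>_. {..<M})"
  proof
    fix y assume "y \<in> g ` {0..M ^ CARD('n)}"
    then obtain q where y: "y = g q" by blast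
    have "g q i < M" for i
    proof -
      have "frac (real q * \<alpha> $ i) < 1" by (rule frac_lt_1)
      hence "real M * frac (real q * \<alpha> $ i) < real M" using assms by simp
      thus ?thesis unfolding g_def using assms by (simp add: nat_less_iff floor_less_iff)
    qed
    thus "y \<in> PiE UNIV (\<lambda>_. {..<M})" using y by auto
  qed
  have cardP: "card (PiE (UNIV::'n set) (\<lambda>_. {..<M})) = M ^ CARD('n)"
    by (simp add: card_PiE)
  have "\<not> inj_on g {0..M ^ CARD('n)}"
  proof
    assume "inj_on g {0..M ^ CARD('n)}"
    hence "card {0..M ^ CARD('n)} \<le> card (PiE (UNIV::'n set) (\<lambda>_. {..<M}))"
      using card_inj_on_le[OF _ img] by (simp add: finite_PiE)
    thus False using cardP by simp
  qed
  then obtain q1 q2 where q12: "q1 < q2" "q2 \<le> M ^ CARD('n)" "g q1 = g q2"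
    unfolding inj_on_def by (metis atLeastAtMost_iff linorder_neqE_nat)
  define b :: "int^'n" where "b = (\<chi> i. \<lfloor>real q2 * \<alpha> $ i\<rfloor> - \<lfloor>real q1 * \<alpha> $ i\<rfloor>)"
  have "\<bar>(E \<alpha> (q2 - q1) b) $ i\<bar> < 1 / real M" for i
  proof -
    define x1 where "x1 = real q1 * \<alpha> $ i"
    define x2 where "x2 = real q2 * \<alpha> $ i"
    have "nat \<lfloor>real M * frac x1\<rfloor> = nat \<lfloor>real M * frac x2\<rfloor>"
      using q12(3) unfolding g_def x1_def x2_def by meson
    moreover have "\<lfloor>real M * frac x1\<rfloor> \<ge> 0" "\<lfloor>real M * frac x2\<rfloor> \<ge> 0"
      by (simp_all add: frac_ge_0)
    ultimately have "\<lfloor>real M * frac x1\<rfloor> = \<lfloor>real M * frac x2\<rfloor>" by (metis nat_eq_iff2)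
    hence "\<bar>real M * frac x2 - real M * frac x1\<bar> < 1" using floor_eq_close by fastforce
    hence "real M * \<bar>frac x2 - frac x1\<bar> < 1" by (simp add: abs_mult right_diff_distrib[symmetric])
    hence lt: "\<bar>frac x2 - frac x1\<bar> < 1 / real M" using assms by (simp add: field_simps)
    have "(E \<alpha> (q2 - q1) b) $ i = frac x2 - frac x1"
      using q12(1) unfolding E_comp b_def x1_def x2_def frac_def
      by (simp add: of_nat_diff left_diff_distrib)
    thus ?thesis using lt by simp
  qed
  moreover have "1 \<le> q2 - q1" "q2 - q1 \<le> M ^ CARD('n)" using q12 by auto
  ultimately show ?thesis by blast
qed



lemma growth:
  fixes f :: "real^'n \<Rightarrow> real" and \<alpha> :: "real^'n"
  assumes nf: "is_norm_fun f"
    and mono: "\<forall>\<nu>\<ge>1. p \<nu> < p (Suc \<nu>)"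
    and ba: "\<forall>q b. best_approx f \<alpha> q b \<longleftrightarrow> (\<exists>\<nu>\<ge>1. q = p \<nu> \<and> b = a \<nu>)"
    and pos: "\<forall>\<nu>\<ge>1. f (E \<alpha> (p \<nu>) (a \<nu>)) > 0"
    and nu: "\<nu> \<ge> 1"
  shows "2 * p \<nu> \<le> p (\<nu> + 2 * 2 ^ CARD('n))"
proof -
  define H :: nat where "H = 2 * 2 ^ CARD('n)"
  define K where "K = {\<nu>..\<nu> + H}"
  define g where "g = (\<lambda>k. (p k mod 2, (\<lambda>i. a k $ i mod 2)))"
  define T where "T = {0::nat, 1} \<times> PiE (UNIV::'n set) (\<lambda>_. {0::int, 1})"
  have img: "g ` K \<subseteq> T"
    unfolding g_def T_def by (auto simp: PiE_def)
  have cT: "card T = H" unfolding T_def H_def by (simp add: card_cartesian_product card_PiE numeral_2_eq_2[symmetric])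
  have fT: "finite T" unfolding T_def by (simp add: finite_PiE)
  have "\<not> inj_on g K"
  proof
    assume "inj_on g K"
    hence "card K \<le> card T" using card_inj_on_le[OF _ img fT] by simp
    thus False using cT unfolding K_def by simp
  qed
  then obtain l k where lk: "l \<in> K" "k \<in> K" "l < k" "g l = g k"
    unfolding inj_on_def by (metis linorder_neqE_nat)
  have l1: "l \<ge> 1" "\<nu> \<le> l" "k \<le> \<nu> + H" using lk nu unfolding K_def by auto
  have plk: "p l < p k" using p_mono[OF mono l1(1) lk(3)] .
  have bal: "best_approx f \<alpha> (p l) (a l)" using ba l1 by blast
  define t where "t = f (E \<alpha> (p l) (a l))"
  have tpos: "t > 0" using pos l1 unfolding t_def by blast
  have fk: "f (E \<alpha> (p k) (a k)) \<le> t"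
    using f_decr[OF mono ba l1(1) lk(3)] unfolding t_def by simp
  have fl: "f (- E \<alpha> (p l) (a l)) \<le> t"
  proof -
    have "\<forall>x. f (- x) = f x" using nf unfolding is_norm_fun_def by blast
    thus ?thesis unfolding t_def by (metis order_refl)
  qed
  have w: "f ((1/2) *\<^sub>R (E \<alpha> (p k) (a k) + - E \<alpha> (p l) (a l))) \<le> t"
    by (rule midpoint_le[OF nf fk fl tpos])
  have "p k mod 2 = p l mod 2" using lk(4) unfolding g_def by (metis prod.inject)
  hence "2 dvd (p k - p l)" using plk by (simp add: mod_eq_dvd_iff_nat)
  then obtain q where q: "p k - p l = 2 * q" by blast
  have am: "\<forall>i. 2 dvd (a k $ i - a l $ i)"
  proof
    fix i
    have "a k $ i mod 2 = a l $ i mod 2" using lk(4) unfolding g_def by (metis prod.inject)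
    thus "2 dvd (a k $ i - a l $ i)" by (simp add: mod_eq_dvd_iff)
  qed
  define b :: "int^'n" where "b = (\<chi> i. (a k $ i - a l $ i) div 2)"
  have "E \<alpha> q b = (1/2) *\<^sub>R (E \<alpha> (p k) (a k) + - E \<alpha> (p l) (a l))"
  proof (subst vec_eq_iff, rule allI)
    fix i
    have rq: "real q = (real (p k) - real (p l)) / 2" using q plk
      by (metis of_nat_diff less_imp_le_nat nonzero_mult_div_cancel_left of_nat_mult of_nat_numeral zero_neq_numeral
            times_divide_eq_left  divide_self_if mult.commute) 
    have rb: "real_of_int (b $ i) = (real_of_int (a k $ i) - real_of_int (a l $ i)) / 2"
      using am unfolding b_def by (simp add: real_of_int_div)
    show "E \<alpha> q b $ i = ((1/2) *\<^sub>R (E \<alpha> (p k) (a k) + - E \<alpha> (p l) (a l))) $ i"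
      by (simp add: int_vec_def rb rq field_simps)
  qed
  hence fw: "f (E \<alpha> q b) \<le> t" using w by simp
  have "q \<ge> p l"
  proof (rule ccontr)
    assume "\<not> q \<ge> p l"
    moreover have "q \<ge> 1" using q plk by linarith
    ultimately have "f (E \<alpha> q b) > t" using bal unfolding best_approx_def t_def by auto
    thus False using fw by simp
  qed
  hence "2 * p l \<le> p k" using q plk by linarith
  moreover have "p \<nu> \<le> p l" using p_mono_le[OF mono nu l1(2)] .
  moreover have "p k \<le> p (\<nu> + H)" using p_mono_le[OF mono _ l1(3)] l1 lk(3) by simp
  ultimately show ?thesis unfolding H_def by linarith
qed

lemma growth_iter:
  fixes f :: "real^'n \<Rightarrow> real" and \<alpha> :: "real^'n"
  assumes nf: "is_norm_fun f"
    and mono: "\<forall>\<nu>\<ge>1. p \<nu> < p (Suc \<nu>)"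
    and ba: "\<forall>q b. best_approx f \<alpha> q b \<longleftrightarrow> (\<exists>\<nu>\<ge>1. q = p \<nu> \<and> b = a \<nu>)"
    and pos: "\<forall>\<nu>\<ge>1. f (E \<alpha> (p \<nu>) (a \<nu>)) > 0"
    and nu: "\<nu> \<ge> 1"
  shows "2 ^ j * p \<nu> \<le> p (\<nu> + j * (2 * 2 ^ CARD('n)))"
proof (induction j)
  case 0 then show ?case by simp
next
  case (Suc j)
  have "2 * p (\<nu> + j * (2 * 2 ^ CARD('n))) \<le> p (\<nu> + j * (2 * 2 ^ CARD('n)) + 2 * 2 ^ CARD('n))"
    by (rule growth[OF nf mono ba pos]) (use nu in simp)
  have "2 ^ Suc j * p \<nu> = 2 * (2 ^ j * p \<nu>)" by simp
  also have "\<dots> \<le> 2 * p (\<nu> + j * (2 * 2 ^ CARD('n)))" using Suc by simp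
  also have "\<dots> \<le> p (\<nu> + j * (2 * 2 ^ CARD('n)) + 2 * 2 ^ CARD('n))" by fact
  also have "\<nu> + j * (2 * 2 ^ CARD('n)) + 2 * 2 ^ CARD('n) = \<nu> + Suc j * (2 * 2 ^ CARD('n))"
    by (simp add: algebra_simps)
  finally show ?case .
qed



theorem corollary2:
  fixes f :: "real^'n \<Rightarrow> real" and \<alpha> :: "real^'n"
    and p :: "nat \<Rightarrow> nat" and a :: "nat \<Rightarrow> int^'n"
  assumes "is_norm_fun f"
    and "badly_approximable \<alpha>"
    and "\<forall>\<nu>\<ge>1. p \<nu> < p (Suc \<nu>)"
    and "\<forall>q b. best_approx f \<alpha> q b \<longleftrightarrow> (\<exists>\<nu>\<ge>1. q = p \<nu> \<and> b = a \<nu>)"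
  shows "\<exists>h::nat. \<forall>\<nu>\<ge>1.
           f (real (p (\<nu> + h)) *\<^sub>R \<alpha> - int_vec (a (\<nu> + h)))
             < 1/2 * f (real (p \<nu>) *\<^sub>R \<alpha> - int_vec (a \<nu>))"
proof -
  note nf = assms(1) and mono = assms(3) and ba = assms(4)
  define N where "N = CARD('n)"
  have N1: "real N \<ge> 1" unfolding N_def by (simp add: Suc_leI)
  obtain c1 where c1: "c1 > 0" "\<forall>x. c1 * norm x \<le> f x" using norm_lower[OF nf] by blast
  have c1': "\<forall>x i. c1 * \<bar>x $ i\<bar> \<le> f x"
    using c1 component_le_norm_cart by (meson dual_order.trans mult_left_mono less_imp_le)
  obtain c2 where c2: "c2 > 0" "\<forall>x. f x \<le> c2 * norm x" using norm_upper[OF nf] by blast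
  have c2': "\<forall>x. f x \<le> c2 * (\<Sum>i\<in>UNIV. \<bar>x $ i\<bar>)"
  proof
    fix x :: "real^'n"
    have "c2 * norm x \<le> c2 * (\<Sum>i\<in>UNIV. \<bar>x $ i\<bar>)" using c2(1) norm_le_l1_cart[of x] by simp
    thus "f x \<le> c2 * (\<Sum>i\<in>UNIV. \<bar>x $ i\<bar>)" using c2(2) by (meson dual_order.trans)
  qed
  obtain D where D: "D > 0" and low: "\<forall>q b. q \<ge> 1 \<longrightarrow> f (E \<alpha> q b) \<ge> c1 * D * real q powr (- 1 / real N)"
    using lower_bound[OF assms(2) c1' c1(1)] unfolding N_def by blast
  have p1: "p \<nu> \<ge> 1" if "\<nu> \<ge> 1" for \<nu>
    using ba that unfolding best_approx_def by blast
  have pos: "\<forall>\<nu>\<ge>1. f (E \<alpha> (p \<nu>) (a \<nu>)) > 0"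
  proof (intro allI impI)
    fix \<nu> :: nat assume "\<nu> \<ge> 1"
    hence "p \<nu> \<ge> 1" using p1 by blast
    hence "c1 * D * real (p \<nu>) powr (- 1 / real N) > 0" using c1 D by simp
    thus "f (E \<alpha> (p \<nu>) (a \<nu>)) > 0" using low \<open>p \<nu> \<ge> 1\<close> by (meson less_le_trans)
  qed
  define A where "A = 2 * c2 * real N / (c1 * D) + 2 * c2 * real N / c1"
  have A1: "A \<ge> 2 * c2 * real N / (c1 * D)" "A \<ge> 2 * c2 * real N / c1"
    unfolding A_def using c1 c2 D N1 by simp_all
  have "2 * c2 * real N / c1 > 0" using c1 c2 N1 by simp
  hence Apos: "A > 0" using A1(2) by linarith
  obtain j :: nat where j: "(A + 2) ^ N < 2 ^ j" using real_arch_pow[of 2 "(A+2)^N"] by auto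
  define h where "h = j * (2 * 2 ^ N)"
  have "f (E \<alpha> (p (\<nu> + h)) (a (\<nu> + h))) < 1/2 * f (E \<alpha> (p \<nu>) (a \<nu>))" if nu: "\<nu> \<ge> 1" for \<nu>
  proof -
    define P where "P = real (p \<nu>)"
    have P1: "P \<ge> 1" using p1[OF nu] unfolding P_def by simp
    define t where "t = P powr (1 / real N)"
    have t1: "t \<ge> 1" unfolding t_def using P1 by (simp add: ge_one_powr_ge_zero)
    have tN: "t ^ N = P"
    proof -
      have "t ^ N = t powr real N" using t1 by (simp add: powr_realpow)
      also have "\<dots> = P powr (1 / real N * real N)" unfolding t_def by (simp add: powr_powr)
      also have "\<dots> = P" using N1 P1 by simp
      finally show ?thesis .
    qed
    have Pm: "P powr (- 1 / real N) = 1 / t"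
      unfolding t_def by (simp add: powr_minus[symmetric] divide_inverse)
    have lowv: "f (E \<alpha> (p \<nu>) (a \<nu>)) \<ge> c1 * D / t"
      using low p1[OF nu] Pm unfolding P_def by (metis times_divide_eq_right mult.right_neutral)
    define M :: nat where "M = nat \<lceil>A * t\<rceil> + 1"
    have At: "A * t > 0" using Apos t1 by simp
    have M1: "real M > A * t" "real M \<le> A * t + 2" "M \<ge> 1" unfolding M_def using At by linarith+
    have "(A + 2) * t = A * t + 2 * t" by (simp add: distrib_right)
    hence MleB: "real M \<le> (A + 2) * t" using M1(2) t1 by linarith
    have "real (M ^ N) \<le> ((A + 2) * t) ^ N" using MleB by (simp add: power_mono)
    also have "\<dots> = (A + 2) ^ N * P" by (simp add: power_mult_distrib tN)
    also have "\<dots> < 2 ^ j * P" using j P1 by simp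
    also have "\<dots> \<le> real (p (\<nu> + h))"
      using growth_iter[OF nf mono ba pos nu, of j] unfolding P_def h_def N_def
      by (metis of_nat_le_iff of_nat_mult of_nat_numeral of_nat_power)
    finally have MN: "M ^ N < p (\<nu> + h)" by linarith
    obtain q b where qb: "1 \<le> q" "q \<le> M ^ N" "\<forall>i. \<bar>(E \<alpha> q b) $ i\<bar> < 1 / real M"
      using dirichlet[OF M1(3), of \<alpha>] unfolding N_def by blast
    have "(\<Sum>i\<in>UNIV. \<bar>(E \<alpha> q b) $ i\<bar>) \<le> (\<Sum>i\<in>(UNIV::'n set). 1 / real M)"
      using qb(3) by (intro sum_mono) (simp add: less_imp_le)
    also have "\<dots> = real N / real M" unfolding N_def by simp
    finally have "f (E \<alpha> q b) \<le> c2 * (real N / real M)"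
      using c2' c2(1) by (meson dual_order.trans mult_left_mono less_imp_le)
    hence fq: "f (E \<alpha> q b) \<le> c2 * real N / real M" by simp
    have Mpos: "real M > 0" using M1 by simp
    have "c2 * real N / real M < c1 / 2"
    proof -
      have "A * 1 \<le> A * t" using Apos t1 by (intro mult_left_mono) auto
      hence "real M > 2 * c2 * real N / c1" using A1(2) M1(1) by linarith
      hence "real M * c1 > 2 * c2 * real N" using c1 by (simp add: field_simps)
      thus ?thesis using Mpos by (simp add: field_simps)
    qed
    hence small: "f (E \<alpha> q b) < c1 / 2" using fq by linarith
    obtain \<mu> where mu: "\<mu> \<ge> 1" "p \<mu> \<le> q" "f (E \<alpha> (p \<mu>) (a \<mu>)) \<le> f (E \<alpha> q b)"
      using domination[OF ba c1' c1(1) qb(1) small] by blast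
    have "\<mu> \<le> \<nu> + h"
    proof (rule ccontr)
      assume "\<not> \<mu> \<le> \<nu> + h"
      hence "p (\<nu> + h) < p \<mu>" using p_mono[OF mono, of "\<nu> + h" \<mu>] nu by simp
      thus False using mu qb MN by linarith
    qed
    hence "f (E \<alpha> (p (\<nu> + h)) (a (\<nu> + h))) \<le> f (E \<alpha> (p \<mu>) (a \<mu>))"
      using f_decr[OF mono ba mu(1)] by (cases "\<mu> = \<nu> + h") (auto intro: less_imp_le)
    also have "\<dots> \<le> c2 * real N / real M" using mu(3) fq by linarith
    also have "\<dots> < c1 * D / t / 2"
    proof -
      have "2 * c2 * real N / (c1 * D) * t \<le> A * t" using A1(1) t1 by (intro mult_right_mono) auto
      hence "real M > 2 * c2 * real N / (c1 * D) * t" using M1(1) by linarith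
      hence "real M * (c1 * D) > 2 * c2 * real N * t" using c1 D by (simp add: field_simps)
      thus ?thesis using Mpos t1 c1 D by (simp add: field_simps)
    qed
    also have "\<dots> \<le> 1/2 * f (E \<alpha> (p \<nu>) (a \<nu>))" using lowv by simp
    finally show ?thesis .
  qed
  thus ?thesis by blast
qed

end
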